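(* Under the standing assumptions, $\dim F(\pi,\pi_0)\le |S^{0}(\pi)|$. Moreover, if $\dim F(\pi,\pi_0)=0$ then $|S^{0}(\pi)|=0$.
   Context: Let $n\ge 1$, $I=\{1,\dots,n\}$ and $X\subseteq\{0,1\}^n$. Standing assumptions: (a) the inequality $\pi^\top x\le \pi_0$ is valid for $X$ and supports $\mathrm{conv}(X)$, i.e. $\pi_0=\max_{x\in X}\pi^\top x$; (b) for every $i\in I$ there exist $x,x'\in X$ with $x_i=0$ and $x'_i=1$. The face is $F(\pi,\pi_0):=\{x\in\mathrm{conv}(X):\pi^\top x=\pi_0\}$. The disjunctive slack vector $\lambda(\pi)$ is defined by $\lambda^0_i(\pi):=\max_{x\in X}\{\pi^\top x: x_i=0\}$, $\lambda^1_i(\pi):=\max_{x\in X}\{\pi^\top x:x_i=1\}$, $\lambda_i(\pi):=\lambda^0_i(\pi)-\lambda^1_i(\pi)$; $S^{0}(\pi)=\{i\in I:\lambda_i(\pi)=0\}$. *)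

theory Defs
  imports "HOL-Analysis.Analysis"
begin

text \<open>Points of X are vectors in real^'n with 0/1 entries; coordinates are indexed by the
  finite type 'n (so I corresponds to UNIV :: 'n set and n = CARD('n) \<ge> 1).\<close>

definition binary_set :: "(real^'n) set \<Rightarrow> bool" where
  "binary_set X \<longleftrightarrow> (\<forall>x\<in>X. \<forall>i. x $ i = 0 \<or> x $ i = 1)"

definition face :: "(real^'n) set \<Rightarrow> real^'n \<Rightarrow> real \<Rightarrow> (real^'n) set" where
  "face X \<pi> \<pi>0 = {x \<in> convex hull X. \<pi> \<bullet> x = \<pi>0}"

definition lambda0 :: "(real^'n) set \<Rightarrow> real^'n \<Rightarrow> 'n \<Rightarrow> real" where
  "lambda0 X \<pi> i = Max {\<pi> \<bullet> x | x. x \<in> X \<and> x $ i = 0}"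

definition lambda1 :: "(real^'n) set \<Rightarrow> real^'n \<Rightarrow> 'n \<Rightarrow> real" where
  "lambda1 X \<pi> i = Max {\<pi> \<bullet> x | x. x \<in> X \<and> x $ i = 1}"

definition disj_slack :: "(real^'n) set \<Rightarrow> real^'n \<Rightarrow> 'n \<Rightarrow> real" where
  "disj_slack X \<pi> i = lambda0 X \<pi> i - lambda1 X \<pi> i"

definition S0 :: "(real^'n) set \<Rightarrow> real^'n \<Rightarrow> 'n set" where
  "S0 X \<pi> = {i. disj_slack X \<pi> i = 0}"

end

theory Submission
  imports Defs
begin

lemma binary_finite:
  fixes X :: "(real^'n) set"
  assumes "binary_set X" shows "finite X"
proof -
  have "X \<subseteq> range (\<lambda>f::'n\<Rightarrow>bool. \<chi> i. if f i then 1 else 0)"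
  proof
    fix x assume "x \<in> X"
    hence "\<forall>i. x $ i = 0 \<or> x $ i = 1" using assms unfolding binary_set_def by blast
    hence "x = (\<chi> i. if x $ i = 1 then 1 else 0)" by (auto simp: vec_eq_iff)
    thus "x \<in> range (\<lambda>f::'n\<Rightarrow>bool. \<chi> i. if f i then 1 else 0)"
      by (intro image_eqI[where x="\<lambda>i. x $ i = 1"]) auto
  qed
  thus ?thesis by (rule finite_subset) simp
qed

lemma halfspace_hull:
  fixes X :: "(real^'n) set"
  assumes "\<forall>y\<in>X. a \<bullet> y \<le> b" "x \<in> convex hull X"
  shows "a \<bullet> x \<le> b"
proof -
  have "convex hull X \<subseteq> {y. a \<bullet> y \<le> b}"
    by (rule hull_minimal) (use assms(1) convex_halfspace_le in auto)
  thus ?thesis using assms(2) by blast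
qed

lemma comp_hull:
  fixes X :: "(real^'n) set"
  assumes "binary_set X" "x \<in> convex hull X"
  shows "0 \<le> x $ i \<and> x $ i \<le> 1"
proof -
  have e: "\<And>y. y $ i = y \<bullet> axis i 1" by (simp add: inner_axis)
  have "(- axis i 1) \<bullet> x \<le> 0"
    by (rule halfspace_hull[OF _ assms(2)]) (use assms(1) in \<open>auto simp: binary_set_def inner_axis' inner_minus_left, metis order_refl zero_le_one\<close>)
  moreover have "axis i 1 \<bullet> x \<le> 1"
    by (rule halfspace_hull[OF _ assms(2)]) (use assms(1) in \<open>auto simp: binary_set_def inner_axis', metis order_refl zero_le_one\<close>)
  ultimately show ?thesis by (simp add: inner_axis' inner_minus_left)
qed

theorem lemma2:
  fixes X :: "(real^'n) set" and \<pi> :: "real^'n" and \<pi>0 :: real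
  assumes bin: "binary_set X"
    and supp: "\<pi>0 = Max ((\<lambda>x. \<pi> \<bullet> x) ` X)"
    and nontriv: "\<forall>i. (\<exists>x\<in>X. x $ i = 0) \<and> (\<exists>x'\<in>X. x' $ i = 1)"
  shows "aff_dim (face X \<pi> \<pi>0) \<le> int (card (S0 X \<pi>))
    \<and> (aff_dim (face X \<pi> \<pi>0) = 0 \<longrightarrow> card (S0 X \<pi>) = 0)"
proof -
  have finX: "finite X" using bin by (rule binary_finite)
  have neX: "X \<noteq> {}" using nontriv by blast
  have le: "\<And>y. y \<in> X \<Longrightarrow> \<pi> \<bullet> y \<le> \<pi>0" using supp finX by simp
  have "\<pi>0 \<in> (\<lambda>x. \<pi> \<bullet> x) ` X" using supp finX neX Max_in[of "(\<lambda>x. \<pi> \<bullet> x) ` X"] by simp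
  then obtain xs where xs: "xs \<in> X" "\<pi> \<bullet> xs = \<pi>0" by auto
  have l0: "\<exists>x\<in>X. x $ i = 0 \<and> \<pi> \<bullet> x = lambda0 X \<pi> i" 
    and l0le: "\<And>y. y \<in> X \<Longrightarrow> y $ i = 0 \<Longrightarrow> \<pi> \<bullet> y \<le> lambda0 X \<pi> i" for i
  proof -
    have f: "finite {\<pi> \<bullet> x | x. x \<in> X \<and> x $ i = 0}" using finX by simp
    have n: "{\<pi> \<bullet> x | x. x \<in> X \<and> x $ i = 0} \<noteq> {}" using nontriv by blast
    show "\<exists>x\<in>X. x $ i = 0 \<and> \<pi> \<bullet> x = lambda0 X \<pi> i"
      using Max_in[OF f n] unfolding lambda0_def by auto
    show "\<And>y. y \<in> X \<Longrightarrow> y $ i = 0 \<Longrightarrow> \<pi> \<bullet> y \<le> lambda0 X \<pi> i"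
      unfolding lambda0_def using f by (intro Max_ge) auto
  qed
  have l1: "\<exists>x\<in>X. x $ i = 1 \<and> \<pi> \<bullet> x = lambda1 X \<pi> i" 
    and l1le: "\<And>y. y \<in> X \<Longrightarrow> y $ i = 1 \<Longrightarrow> \<pi> \<bullet> y \<le> lambda1 X \<pi> i" for i
  proof -
    have f: "finite {\<pi> \<bullet> x | x. x \<in> X \<and> x $ i = 1}" using finX by simp
    have n: "{\<pi> \<bullet> x | x. x \<in> X \<and> x $ i = 1} \<noteq> {}" using nontriv by blast
    show "\<exists>x\<in>X. x $ i = 1 \<and> \<pi> \<bullet> x = lambda1 X \<pi> i"
      using Max_in[OF f n] unfolding lambda1_def by auto
    show "\<And>y. y \<in> X \<Longrightarrow> y $ i = 1 \<Longrightarrow> \<pi> \<bullet> y \<le> lambda1 X \<pi> i"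
      unfolding lambda1_def using f by (intro Max_ge) auto
  qed
  have l0pi: "lambda0 X \<pi> i \<le> \<pi>0" and l1pi: "lambda1 X \<pi> i \<le> \<pi>0" for i
    using l0[of i] l1[of i] le by metis+
  have lmax: "lambda0 X \<pi> i = \<pi>0 \<or> lambda1 X \<pi> i = \<pi>0" for i
  proof -
    have "xs $ i = 0 \<or> xs $ i = 1" using bin xs unfolding binary_set_def by blast
    thus ?thesis using l0le[of xs i] l1le[of xs i] l0pi[of i] l1pi[of i] xs by auto
  qed
  define c where "c i = (if lambda0 X \<pi> i = \<pi>0 then 0 else (1::real))" for i
  have fix_coord: "x $ i = c i" if x: "x \<in> face X \<pi> \<pi>0" and i: "i \<notin> S0 X \<pi>" for x i
  proof -
    have hx: "x \<in> convex hull X" "\<pi> \<bullet> x = \<pi>0" using x unfolding face_def by auto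
    have ne: "lambda0 X \<pi> i \<noteq> lambda1 X \<pi> i" using i unfolding S0_def disj_slack_def by auto
    have b: "0 \<le> x $ i \<and> x $ i \<le> 1" using comp_hull[OF bin hx(1)] .
    show ?thesis
    proof (cases "lambda0 X \<pi> i = \<pi>0")
      case True
      define d where "d = \<pi>0 - lambda1 X \<pi> i"
      have d: "d > 0" using True ne l1pi[of i] unfolding d_def by linarith
      have "(\<pi> + d *\<^sub>R axis i 1) \<bullet> x \<le> \<pi>0"
      proof (rule halfspace_hull[OF _ hx(1)], intro ballI)
        fix y assume y: "y \<in> X"
        have "y $ i = 0 \<or> y $ i = 1" using bin y unfolding binary_set_def by blast
        thus "(\<pi> + d *\<^sub>R axis i 1) \<bullet> y \<le> \<pi>0"
          using le[OF y] l1le[OF y] unfolding d_def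
          by (auto simp: inner_add_left inner_axis')
      qed
      hence "d * x $ i \<le> 0" using hx(2) by (simp add: inner_add_left inner_axis')
      hence "x $ i \<le> 0" using d by (simp add: mult_le_0_iff)
      thus ?thesis using b True unfolding c_def by simp
    next
      case False
      hence T: "lambda1 X \<pi> i = \<pi>0" using lmax by blast
      define d where "d = \<pi>0 - lambda0 X \<pi> i"
      have d: "d > 0" using False l0pi[of i] unfolding d_def by linarith
      have "(\<pi> - d *\<^sub>R axis i 1) \<bullet> x \<le> \<pi>0 - d"
      proof (rule halfspace_hull[OF _ hx(1)], intro ballI)
        fix y assume y: "y \<in> X"
        have "y $ i = 0 \<or> y $ i = 1" using bin y unfolding binary_set_def by blast
        thus "(\<pi> - d *\<^sub>R axis i 1) \<bullet> y \<le> \<pi>0 - d"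
          using le[OF y] l0le[OF y] unfolding d_def
          by (auto simp: inner_diff_left inner_axis')
      qed
      hence "d * (1 - x $ i) \<le> 0" using hx(2) by (simp add: inner_diff_left inner_axis' algebra_simps)
      hence "1 - x $ i \<le> 0" using d by (simp add: mult_le_0_iff)
      thus ?thesis using b False unfolding c_def by simp
    qed
  qed
  have part1: "aff_dim (face X \<pi> \<pi>0) \<le> int (card (S0 X \<pi>))"
  proof (cases "face X \<pi> \<pi>0 = {}")
    case True thus ?thesis by simp
  next
    case False
    then obtain a where a: "a \<in> face X \<pi> \<pi>0" by blast
    define B where "B = (\<lambda>i. axis i (1::real)) ` S0 X \<pi>"
    have sub: "(\<lambda>x. x - a) ` face X \<pi> \<pi>0 \<subseteq> span B"
    proof
      fix z assume "z \<in> (\<lambda>x. x - a) ` face X \<pi> \<pi>0"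
      then obtain x where x: "x \<in> face X \<pi> \<pi>0" and z: "z = x - a" by blast
      have zi: "i \<notin> S0 X \<pi> \<Longrightarrow> z $ i = 0" for i using fix_coord[OF x] fix_coord[OF a] z by simp
      have "z = (\<Sum>i\<in>UNIV. z $ i *\<^sub>R axis i 1)"
        using basis_expansion[of z] by (simp add: scalar_mult_eq_scaleR)
      also have "\<dots> = (\<Sum>i\<in>S0 X \<pi>. z $ i *\<^sub>R axis i 1)"
        by (rule sum.mono_neutral_right) (auto simp: zi)
      also have "\<dots> \<in> span B"
        by (intro span_sum span_mul span_base) (auto simp: B_def)
      finally show "z \<in> span B" .
    qed
    have "aff_dim (face X \<pi> \<pi>0) = aff_dim ((\<lambda>x. x - a) ` face X \<pi> \<pi>0)"
      by (simp add: aff_dim_translation_eq_subtract)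
    also have "\<dots> \<le> aff_dim (span B)" by (rule aff_dim_subset[OF sub])
    also have "\<dots> = int (dim (span B))" by (simp add: aff_dim_subspace)
    also have "\<dots> \<le> int (card B)"
      by (simp add: B_def dim_le_card')
    also have "\<dots> \<le> int (card (S0 X \<pi>))" unfolding B_def by (simp add: card_image_le)
    finally show ?thesis .
  qed
  have part2: "card (S0 X \<pi>) = 0" if h: "aff_dim (face X \<pi> \<pi>0) = 0"
  proof -
    obtain p where p: "face X \<pi> \<pi>0 = {p}" using h aff_dim_eq_0 by blast
    have "S0 X \<pi> = {}"
    proof (rule ccontr)
      assume "S0 X \<pi> \<noteq> {}"
      then obtain i where i: "disj_slack X \<pi> i = 0" unfolding S0_def by blast
      hence eq: "lambda0 X \<pi> i = \<pi>0 \<and> lambda1 X \<pi> i = \<pi>0"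
        using lmax[of i] unfolding disj_slack_def by auto
      obtain x0 where x0: "x0 \<in> X" "x0 $ i = 0" "\<pi> \<bullet> x0 = \<pi>0" using l0[of i] eq by auto
      obtain x1 where x1: "x1 \<in> X" "x1 $ i = 1" "\<pi> \<bullet> x1 = \<pi>0" using l1[of i] eq by auto
      have "x0 \<in> face X \<pi> \<pi>0" "x1 \<in> face X \<pi> \<pi>0"
        using x0 x1 by (auto simp: face_def hull_inc)
      hence "x0 = x1" using p by auto
      thus False using x0 x1 by simp
    qed
    thus ?thesis by simp
  qed
  show ?thesis using part1 part2 by blast
qed

end
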